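(* Consider $\min_u F(u)+G(u)$ under the assumptions below, with $G$ convex and $F+G$ strongly convex. Let $\{(y^t,z^t,x^t)\}$ be generated by the modified PR iteration with $\gamma\in(0,\frac1{12L_F})$. Then $(y^t,z^t,x^t)$ converges to some $(\bar y,\bar z,\bar x)$ with $\bar y=\bar z$ and $\bar z$ the unique minimizer of $F+G$, and the convergence is linear: there exist $M>0$ and $r\in(0,1)$ such that for all $t\ge1$, \[ \max\{\|y^t-\bar y\|^2,\|z^t-\bar z\|^2,\|x^t-\bar x\|^2\}\le M r^t . \]
   Context: Assumptions: $F:\mathbb{R}^n\to\mathbb{R}$ is convex and differentiable with $\nabla F$ Lipschitz continuous with modulus at most $L_F>0$; $G:\mathbb{R}^n\to(-\infty,\infty]$ is proper, lower semicontinuous, and $\operatorname{Argmin}_u\{\tau G(u)+\frac12\|u-w\|^2\}$ is nonempty for every $w$ and every $\tau>0$; $F+G$ is coercive. Modified PR iteration: given $x^0$ and $\gamma\in(0,\frac1{12L_F})$, for $t=0,1,\dots$: $y^{t+1}=\operatorname{argmin}_y\{F(y)+\frac{5L_F}{2}\|y\|^2+\frac1{2\gamma}\|y-x^t\|^2\}$; $z^{t+1}\in\operatorname{Argmin}_z\{G(z)-\frac{5L_F}{2}\|z\|^2+\frac1{2\gamma}\|2y^{t+1}-x^t-z\|^2\}$; $x^{t+1}=x^t+2(z^{t+1}-y^{t+1})$. *)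

theory Defs
  imports "HOL-Analysis.Analysis"
begin

definition proper_fun :: "('a \<Rightarrow> ereal) \<Rightarrow> bool" where
  "proper_fun G \<longleftrightarrow> (\<forall>u. G u \<noteq> -\<infinity>) \<and> (\<exists>u. G u \<noteq> \<infinity>)"

definition lsc_fun :: "('a::topological_space \<Rightarrow> ereal) \<Rightarrow> bool" where
  "lsc_fun G \<longleftrightarrow> (\<forall>x c. c < G x \<longrightarrow> (\<forall>\<^sub>F u in nhds x. c < G u))"

definition ext_convex :: "('a::real_vector \<Rightarrow> ereal) \<Rightarrow> bool" where
  "ext_convex G \<longleftrightarrow> (\<forall>x y (l::real). 0 < l \<and> l < 1 \<longrightarrow>
      G ((1 - l) *\<^sub>R x + l *\<^sub>R y) \<le> ereal (1 - l) * G x + ereal l * G y)"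

definition ext_strongly_convex :: "('a::real_normed_vector \<Rightarrow> ereal) \<Rightarrow> bool" where
  "ext_strongly_convex H \<longleftrightarrow> (\<exists>\<mu>>0. \<forall>x y (l::real). 0 < l \<and> l < 1 \<longrightarrow>
      H ((1 - l) *\<^sub>R x + l *\<^sub>R y) + ereal (\<mu> / 2 * l * (1 - l) * (norm (x - y))\<^sup>2)
        \<le> ereal (1 - l) * H x + ereal l * H y)"

definition Argmin :: "('a \<Rightarrow> 'b::order) \<Rightarrow> 'a set" where
  "Argmin f = {u. \<forall>v. f u \<le> f v}"

definition coercive :: "('a::real_normed_vector \<Rightarrow> ereal) \<Rightarrow> bool" where
  "coercive H \<longleftrightarrow> (H \<longlongrightarrow> \<infinity>) at_infinity"

end

theory Submission
  imports Defs
begin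


lemma small_lemma:
  fixes Q C :: real
  assumes "\<And>s. 0 < s \<Longrightarrow> s < 1 \<Longrightarrow> -(s*C) \<le> Q"
  shows "0 \<le> Q"
proof (rule ccontr)
  assume "\<not> 0 \<le> Q"
  hence Q: "Q < 0" by simp
  define s where "s = min (1/2) (-Q/(\<bar>C\<bar>+1))"
  have s0: "0 < s" using Q by (simp add: s_def divide_neg_pos)
  have s1: "s < 1" by (simp add: s_def)
  have "s * \<bar>C\<bar> \<le> (-Q/(\<bar>C\<bar>+1)) * \<bar>C\<bar>"
    by (rule mult_right_mono) (auto simp: s_def)
  also have "\<dots> < -Q"
  proof -
    have "(-Q/(\<bar>C\<bar>+1)) * \<bar>C\<bar> = -Q * (\<bar>C\<bar>/(\<bar>C\<bar>+1))" by simp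
    also have "\<dots> < -Q * 1"
      using Q by (intro mult_strict_left_mono) auto
    finally show ?thesis by simp
  qed
  finally have "s*\<bar>C\<bar> < -Q" .
  moreover have "-(s*C) \<ge> - (s*\<bar>C\<bar>)" using s0 by (simp add: abs_ge_self mult_left_mono)
  ultimately show False using assms[OF s0 s1] by linarith
qed

lemma taylor_bound:
  fixes F :: "'a::real_inner \<Rightarrow> real"
  assumes F_grad: "\<And>u. (F has_derivative (\<lambda>h. gradF u \<bullet> h)) (at u)"
    and F_lip: "\<And>u v. norm (gradF u - gradF v) \<le> L * norm (u - v)"
    and L0: "L \<ge> 0"
  shows "\<bar>F v - F u - gradF u \<bullet> (v - u)\<bar> \<le> L * (norm (v - u))\<^sup>2"
proof -
  define h where "h t = F (u + t *\<^sub>R (v - u))" for t :: real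
  have d: "(h has_derivative (\<lambda>s. gradF (u + t *\<^sub>R (v - u)) \<bullet> (s *\<^sub>R (v - u)))) (at t within {0..1})" for t
    unfolding h_def
    by (rule has_derivative_at_withinI, rule has_derivative_compose[OF _ F_grad])
       (auto intro!: derivative_eq_intros)
  obtain t where t: "t \<in> {0<..<1}" and eq: "h 1 - h 0 = gradF (u + t *\<^sub>R (v - u)) \<bullet> (1 *\<^sub>R (v - u))"
    using mvt_simple[of 0 1 h, OF _ d] by auto
  have "F v - F u - gradF u \<bullet> (v - u) = (gradF (u + t *\<^sub>R (v - u)) - gradF u) \<bullet> (v - u)"
    using eq by (simp add: h_def inner_diff_left)
  also have "\<bar>\<dots>\<bar> \<le> norm (gradF (u + t *\<^sub>R (v - u)) - gradF u) * norm (v - u)"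
    by (rule Cauchy_Schwarz_ineq2)
  also have "\<dots> \<le> L * norm (t *\<^sub>R (v - u)) * norm (v - u)"
    using F_lip[of "u + t *\<^sub>R (v - u)" u] by (intro mult_right_mono) auto
  also have "\<dots> \<le> L * norm (v - u) * norm (v - u)"
    using t L0 by (intro mult_right_mono mult_left_mono) (auto intro!: mult_left_le_one_le)
  finally show ?thesis by (simp add: power2_eq_square mult.assoc)
qed



lemma div_s:
  fixes s Q C :: real
  assumes "0 < s" "s * Q \<ge> - (s * (s * C))"
  shows "-(s*C) \<le> Q"
proof -
  have "s * (-(s*C)) \<le> s * Q" using assms(2) by simp
  thus ?thesis using assms(1) by (metis mult_le_cancel_left_pos)
qed

lemma grad_ineq:
  fixes F :: "'a::real_inner \<Rightarrow> real"
  assumes F_convex: "convex_on UNIV F"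
    and F_grad: "\<And>u. (F has_derivative (\<lambda>h. gradF u \<bullet> h)) (at u)"
    and F_lip: "\<And>u v. norm (gradF u - gradF v) \<le> L * norm (u - v)"
    and L0: "L \<ge> 0"
  shows "F u + gradF u \<bullet> (v - u) \<le> F v"
proof -
  have "0 \<le> F v - F u - gradF u \<bullet> (v - u)"
  proof (rule small_lemma[where C = "L * (norm (v - u))\<^sup>2"])
    fix s :: real assume s: "0 < s" "s < 1"
    define w where "w = (1 - s) *\<^sub>R u + s *\<^sub>R v"
    have w: "w - u = s *\<^sub>R (v - u)" by (simp add: w_def algebra_simps)
    have c: "F w \<le> (1 - s) * F u + s * F v"
      unfolding w_def using s by (intro convex_onD[OF F_convex]) auto
    have t: "\<bar>F w - F u - gradF u \<bullet> (w - u)\<bar> \<le> L * (norm (w - u))\<^sup>2"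
      by (rule taylor_bound[OF F_grad F_lip L0])
    have "(norm (w - u))\<^sup>2 = s * (s * (norm (v - u))\<^sup>2)" using s
      by (simp add: w power_mult_distrib power2_eq_square)
    hence t2: "F w - F u - s * (gradF u \<bullet> (v - u)) \<ge> - (L * (s * (s * (norm (v - u))\<^sup>2)))"
      using t by (simp add: w)
    have "s * (F v - F u - gradF u \<bullet> (v - u)) \<ge> - (s * (s * (L * (norm (v - u))\<^sup>2)))"
      using c t2 by (simp add: algebra_simps)
    thus "-(s * (L * (norm (v - u))\<^sup>2)) \<le> F v - F u - gradF u \<bullet> (v - u)"
      using div_s s(1) by blast
  qed
  thus ?thesis by simp
qed

lemma cocoercive_half:
  fixes F :: "'a::real_inner \<Rightarrow> real"
  assumes F_convex: "convex_on UNIV F"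
    and F_grad: "\<And>u. (F has_derivative (\<lambda>h. gradF u \<bullet> h)) (at u)"
    and F_lip: "\<And>u v. norm (gradF u - gradF v) \<le> L * norm (u - v)"
    and L0: "L > 0"
  shows "F y - F u - gradF u \<bullet> (y - u) \<ge> (norm (gradF y - gradF u))\<^sup>2 / (4 * L)"
proof -
  define d where "d = gradF y - gradF u"
  define v where "v = y - (1 / (2 * L)) *\<^sub>R d"
  have g: "F u + gradF u \<bullet> (v - u) \<le> F v"
    using grad_ineq[OF F_convex F_grad F_lip] L0 by auto
  have t: "F v \<le> F y + gradF y \<bullet> (v - y) + L * (norm (v - y))\<^sup>2"
    using taylor_bound[OF F_grad F_lip, of v y] L0 by auto
  have vy: "v - y = - ((1 / (2 * L)) *\<^sub>R d)" by (simp add: v_def)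
  have n: "L * (norm (v - y))\<^sup>2 = (norm d)\<^sup>2 / (4 * L)"
    using L0 by (simp add: vy power2_eq_square field_simps)
  have e1: "gradF u \<bullet> (v - u) = gradF u \<bullet> (y - u) - (gradF u \<bullet> d) / (2 * L)"
    by (simp add: v_def inner_diff_right)
  have e2: "gradF y \<bullet> (v - y) = - (gradF y \<bullet> d) / (2 * L)"
    by (simp add: vy)
  have e3: "gradF y \<bullet> d - gradF u \<bullet> d = (norm d)\<^sup>2"
    by (simp add: d_def power2_norm_eq_inner inner_diff_left)
  have "F u + gradF u \<bullet> (y - u) - (gradF u \<bullet> d) / (2 * L)
      \<le> F y - (gradF y \<bullet> d) / (2 * L) + (norm d)\<^sup>2 / (4 * L)"
    using g t n e1 e2 by linarith
  hence "F y - F u - gradF u \<bullet> (y - u) \<ge> (gradF y \<bullet> d - gradF u \<bullet> d) / (2 * L) - (norm d)\<^sup>2 / (4 * L)"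
    by (simp add: diff_divide_distrib)
  also have "(gradF y \<bullet> d - gradF u \<bullet> d) / (2 * L) - (norm d)\<^sup>2 / (4 * L) = (norm d)\<^sup>2 / (4 * L)"
    using L0 by (simp add: e3 field_simps)
  finally show ?thesis by (simp add: d_def)
qed

lemma cocoercive:
  fixes F :: "'a::real_inner \<Rightarrow> real"
  assumes F_convex: "convex_on UNIV F"
    and F_grad: "\<And>u. (F has_derivative (\<lambda>h. gradF u \<bullet> h)) (at u)"
    and F_lip: "\<And>u v. norm (gradF u - gradF v) \<le> L * norm (u - v)"
    and L0: "L > 0"
  shows "(gradF y - gradF u) \<bullet> (y - u) \<ge> (norm (gradF y - gradF u))\<^sup>2 / (2 * L)"
proof -
  have a: "F y - F u - gradF u \<bullet> (y - u) \<ge> (norm (gradF y - gradF u))\<^sup>2 / (4 * L)"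
    by (rule cocoercive_half[OF assms])
  have b: "F u - F y - gradF y \<bullet> (u - y) \<ge> (norm (gradF u - gradF y))\<^sup>2 / (4 * L)"
    by (rule cocoercive_half[OF assms])
  have "norm (gradF u - gradF y) = norm (gradF y - gradF u)" by (rule norm_minus_commute)
  moreover have "gradF y \<bullet> (u - y) = - (gradF y \<bullet> (y - u))"
    by (simp add: inner_diff_right)
  moreover have "(gradF y - gradF u) \<bullet> (y - u) = gradF y \<bullet> (y - u) - gradF u \<bullet> (y - u)"
    by (simp add: inner_diff_left)
  ultimately show ?thesis using a b by (simp add: field_simps)
qed



lemma quad_expand:
  fixes v y x :: "'a::real_inner"
  shows "(norm v)\<^sup>2 - (norm y)\<^sup>2 = 2 * (y \<bullet> (v - y)) + (norm (v - y))\<^sup>2"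
    and "(norm (v - x))\<^sup>2 - (norm (y - x))\<^sup>2 = 2 * ((y - x) \<bullet> (v - y)) + (norm (v - y))\<^sup>2"
  by (simp_all add: power2_norm_eq_inner inner_diff_left inner_diff_right inner_commute algebra_simps)

lemma y_opt:
  fixes F :: "'a::real_inner \<Rightarrow> real"
  assumes F_grad: "\<And>u. (F has_derivative (\<lambda>h. gradF u \<bullet> h)) (at u)"
    and F_lip: "\<And>u v. norm (gradF u - gradF v) \<le> L * norm (u - v)"
    and L0: "L > 0" and g0: "\<gamma> > 0"
    and ymin: "y \<in> Argmin (\<lambda>v. F v + 5 * L / 2 * (norm v)\<^sup>2 + (norm (v - x))\<^sup>2 / (2 * \<gamma>))"
  shows "gradF y + (5 * L) *\<^sub>R y + (1 / \<gamma>) *\<^sub>R (y - x) = 0"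
proof -
  define \<psi> where "\<psi> v = F v + 5 * L / 2 * (norm v)\<^sup>2 + (norm (v - x))\<^sup>2 / (2 * \<gamma>)" for v
  define d where "d = gradF y + (5 * L) *\<^sub>R y + (1 / \<gamma>) *\<^sub>R (y - x)"
  define K where "K = L + 5 * L / 2 + 1 / (2 * \<gamma>)"
  have min: "\<psi> y \<le> \<psi> v" for v using ymin by (simp add: Argmin_def \<psi>_def)
  have exp: "\<psi> v - \<psi> y = (F v - F y - gradF y \<bullet> (v - y)) + d \<bullet> (v - y)
       + (5 * L / 2 + 1 / (2 * \<gamma>)) * (norm (v - y))\<^sup>2" for v
  proof -
    have "\<psi> v - \<psi> y = (F v - F y) + 5 * L / 2 * ((norm v)\<^sup>2 - (norm y)\<^sup>2)
        + ((norm (v - x))\<^sup>2 - (norm (y - x))\<^sup>2) / (2 * \<gamma>)"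
      by (simp add: \<psi>_def algebra_simps diff_divide_distrib)
    also have "\<dots> = (F v - F y) + 5 * L / 2 * (2 * (y \<bullet> (v - y)) + (norm (v - y))\<^sup>2)
        + (2 * ((y - x) \<bullet> (v - y)) + (norm (v - y))\<^sup>2) / (2 * \<gamma>)"
      by (subst quad_expand(2), subst quad_expand(1), rule refl)
    also have "\<dots> = (F v - F y - gradF y \<bullet> (v - y)) + d \<bullet> (v - y)
       + (5 * L / 2 + 1 / (2 * \<gamma>)) * (norm (v - y))\<^sup>2"
    proof -
      have "d \<bullet> (v - y) = gradF y \<bullet> (v - y) + 5 * L * (y \<bullet> (v - y)) + (1 / \<gamma>) * ((y - x) \<bullet> (v - y))"
        by (simp add: d_def inner_add_left)
      moreover have "(2 * ((y - x) \<bullet> (v - y)) + (norm (v - y))\<^sup>2) / (2 * \<gamma>)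
          = (1 / \<gamma>) * ((y - x) \<bullet> (v - y)) + 1 / (2 * \<gamma>) * (norm (v - y))\<^sup>2"
        using g0 by (simp add: field_simps)
      ultimately show ?thesis by (simp add: algebra_simps)
    qed
    finally show ?thesis .
  qed
  have "0 \<le> - (norm d)\<^sup>2"
  proof (rule small_lemma[where C = "K * (norm d)\<^sup>2"])
    fix s :: real assume s: "0 < s" "s < 1"
    define v where "v = y - s *\<^sub>R d"
    have vy: "v - y = - (s *\<^sub>R d)" by (simp add: v_def)
    have t: "F v - F y - gradF y \<bullet> (v - y) \<le> L * (norm (v - y))\<^sup>2"
      using taylor_bound[OF F_grad F_lip, of v y] L0 by auto
    have n: "(norm (v - y))\<^sup>2 = s * (s * (norm d)\<^sup>2)"
      using s by (simp add: vy power2_eq_square)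
    have dd: "d \<bullet> (v - y) = - (s * (norm d)\<^sup>2)"
      by (simp add: vy power2_norm_eq_inner)
    have "0 \<le> \<psi> v - \<psi> y" using min[of v] by simp
    also have "\<dots> \<le> L * (norm (v - y))\<^sup>2 - s * (norm d)\<^sup>2 + (5 * L / 2 + 1 / (2 * \<gamma>)) * (norm (v - y))\<^sup>2"
      using exp[of v] t dd by linarith
    also have "\<dots> = s * (- (norm d)\<^sup>2) + s * (s * (K * (norm d)\<^sup>2))"
      by (simp add: n K_def algebra_simps)
    finally have "s * (- (norm d)\<^sup>2) \<ge> - (s * (s * (K * (norm d)\<^sup>2)))" by linarith
    thus "-(s * (K * (norm d)\<^sup>2)) \<le> - (norm d)\<^sup>2" using div_s s(1) by blast
  qed
  hence "norm d = 0" by simp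
  thus ?thesis by (simp add: d_def)
qed



lemma quad_expand2:
  fixes a z h :: "'a::real_inner"
  shows "(norm (a - (z + h)))\<^sup>2 = (norm (a - z))\<^sup>2 - 2 * ((a - z) \<bullet> h) + (norm h)\<^sup>2"
    and "(norm (z + h))\<^sup>2 = (norm z)\<^sup>2 + 2 * (z \<bullet> h) + (norm h)\<^sup>2"
  by (simp_all add: power2_norm_eq_inner inner_diff_left inner_diff_right inner_add_left inner_add_right inner_commute algebra_simps)

lemma z_subgrad:
  fixes G :: "'a::real_inner \<Rightarrow> ereal"
  assumes G_proper: "proper_fun G" and G_convex: "ext_convex G" and g0: "\<gamma> > 0"
    and zmin: "z \<in> Argmin (\<lambda>v. G v - ereal (5 * L / 2 * (norm v)\<^sup>2)
                    + ereal ((norm (a - v))\<^sup>2 / (2 * \<gamma>)))"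
  shows "\<exists>gz. G z = ereal gz \<and> (\<forall>v. ereal (gz + ((5 * L) *\<^sub>R z + (1 / \<gamma>) *\<^sub>R (a - z)) \<bullet> (v - z)) \<le> G v)"
proof -
  define \<Phi> where "\<Phi> v = - (5 * L / 2 * (norm v)\<^sup>2) + (norm (a - v))\<^sup>2 / (2 * \<gamma>)" for v
  define w where "w = (5 * L) *\<^sub>R z + (1 / \<gamma>) *\<^sub>R (a - z)"
  have min: "G z - ereal (5 * L / 2 * (norm z)\<^sup>2) + ereal ((norm (a - z))\<^sup>2 / (2 * \<gamma>))
      \<le> G v - ereal (5 * L / 2 * (norm v)\<^sup>2) + ereal ((norm (a - v))\<^sup>2 / (2 * \<gamma>))" for v
    using zmin by (simp add: Argmin_def)
  have ninf: "G u \<noteq> -\<infinity>" for u using G_proper by (simp add: proper_fun_def)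
  obtain p where p: "G p \<noteq> \<infinity>" using G_proper by (auto simp: proper_fun_def)
  obtain gp where gp: "G p = ereal gp" using p ninf[of p] by (cases "G p") auto
  have "G z \<noteq> \<infinity>"
  proof
    assume "G z = \<infinity>"
    hence "G z - ereal (5 * L / 2 * (norm z)\<^sup>2) + ereal ((norm (a - z))\<^sup>2 / (2 * \<gamma>)) = \<infinity>" by simp
    with min[of p] gp show False by simp
  qed
  then obtain gz where gz: "G z = ereal gz" using ninf[of z] by (cases "G z") auto
  have key: "ereal (gz + w \<bullet> (v - z)) \<le> G v" for v
  proof (cases "G v = \<infinity>")
    case True thus ?thesis by simp
  next
    case False
    then obtain gv where gv: "G v = ereal gv" using ninf[of v] by (cases "G v") auto
    have "0 \<le> gv - gz - w \<bullet> (v - z)"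
    proof (rule small_lemma[where C = "(1 / (2 * \<gamma>) - 5 * L / 2) * (norm (v - z))\<^sup>2"])
      fix s :: real assume s: "0 < s" "s < 1"
      define vs where "vs = (1 - s) *\<^sub>R z + s *\<^sub>R v"
      have h: "vs = z + s *\<^sub>R (v - z)" by (simp add: vs_def algebra_simps)
      have "G vs \<le> ereal (1 - s) * G z + ereal s * G v"
        using G_convex s unfolding ext_convex_def vs_def by blast
      hence cv: "G vs \<le> ereal ((1 - s) * gz + s * gv)" by (simp add: gz gv)
      then obtain gs where gs: "G vs = ereal gs" using ninf[of vs] by (cases "G vs") auto
      have gs_le: "gs \<le> (1 - s) * gz + s * gv" using cv gs by simp
      have "ereal (gz + \<Phi> z) \<le> ereal (gs + \<Phi> vs)"
        using min[of vs] by (simp add: gz gs \<Phi>_def)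
      hence m2: "gz + \<Phi> z \<le> gs + \<Phi> vs" by simp
      have phi: "\<Phi> vs = \<Phi> z - s * (w \<bullet> (v - z)) + s * (s * ((1 / (2 * \<gamma>) - 5 * L / 2) * (norm (v - z))\<^sup>2))"
      proof -
        have "\<Phi> vs = - (5 * L / 2 * ((norm z)\<^sup>2 + 2 * (z \<bullet> (s *\<^sub>R (v - z))) + (norm (s *\<^sub>R (v - z)))\<^sup>2))
           + ((norm (a - z))\<^sup>2 - 2 * ((a - z) \<bullet> (s *\<^sub>R (v - z))) + (norm (s *\<^sub>R (v - z)))\<^sup>2) / (2 * \<gamma>)"
          unfolding \<Phi>_def h quad_expand2 ..
        also have "\<dots> = - (5 * L / 2 * ((norm z)\<^sup>2 + 2 * (s * (z \<bullet> (v - z))) + s * (s * (norm (v - z))\<^sup>2)))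
           + ((norm (a - z))\<^sup>2 - 2 * (s * ((a - z) \<bullet> (v - z))) + s * (s * (norm (v - z))\<^sup>2)) / (2 * \<gamma>)"
          using s by (simp add: power2_eq_square mult.assoc mult.left_commute)
        also have "\<dots> = \<Phi> z - s * (5 * L * (z \<bullet> (v - z)) + (1 / \<gamma>) * ((a - z) \<bullet> (v - z)))
             + s * (s * ((1 / (2 * \<gamma>) - 5 * L / 2) * (norm (v - z))\<^sup>2))"
          using g0 by (simp add: \<Phi>_def field_simps)
        also have "5 * L * (z \<bullet> (v - z)) + (1 / \<gamma>) * ((a - z) \<bullet> (v - z)) = w \<bullet> (v - z)"
          by (simp add: w_def inner_add_left)
        finally show ?thesis .
      qed
      have "s * (gv - gz - w \<bullet> (v - z)) \<ge> - (s * (s * ((1 / (2 * \<gamma>) - 5 * L / 2) * (norm (v - z))\<^sup>2)))"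
        using m2 phi gs_le by (simp add: algebra_simps)
      thus "- (s * ((1 / (2 * \<gamma>) - 5 * L / 2) * (norm (v - z))\<^sup>2)) \<le> gv - gz - w \<bullet> (v - z)"
        using div_s s(1) by blast
    qed
    thus ?thesis by (simp add: gv)
  qed
  show ?thesis using gz key unfolding w_def by blast
qed



lemma lsc_sum:
  fixes F :: "'a::real_normed_vector \<Rightarrow> real" and G :: "'a \<Rightarrow> ereal"
  assumes G_lsc: "lsc_fun G" and ninf: "\<And>u. G u \<noteq> -\<infinity>"
    and Fc: "\<And>u. isCont F u"
    and lt: "c < ereal (F x) + G x"
  shows "\<forall>\<^sub>F u in nhds x. c < ereal (F u) + G u"
proof (cases c)
  case MInf
  thus ?thesis using ninf by (auto intro!: always_eventually)
next
  case PInf thus ?thesis using lt by simp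
next
  case (real c0)
  have "ereal (c0 - F x) < G x"
  proof (cases "G x")
    case (real g) thus ?thesis using lt \<open>c = ereal c0\<close> by simp
  qed (use ninf[of x] in auto)
  then obtain r where r1: "ereal (c0 - F x) < ereal r" and r2: "ereal r < G x"
    using ereal_dense2 by blast
  define e where "e = r - (c0 - F x)"
  have e: "e > 0" using r1 by (simp add: e_def)
  have ev1: "\<forall>\<^sub>F u in nhds x. ereal r < G u" using G_lsc r2 by (simp add: lsc_fun_def)
  have "\<forall>\<^sub>F u in at x. dist (F u) (F x) < e"
    using Fc[of x] e unfolding isCont_def by (simp add: tendsto_iff)
  hence ev2: "\<forall>\<^sub>F u in nhds x. dist (F u) (F x) < e"
    using e by (simp add: eventually_nhds_conv_at)
  show ?thesis
  proof (rule eventually_mono[OF eventually_conj[OF ev1 ev2]])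
    fix u assume u: "ereal r < G u \<and> dist (F u) (F x) < e"
    hence "F u > F x - e" by (simp add: dist_real_def abs_less_iff)
    hence "c0 < F u + r" by (simp add: e_def)
    hence "ereal c0 < ereal (F u) + ereal r" by simp
    also have "\<dots> \<le> ereal (F u) + G u" using u by (intro add_left_mono) (simp add: less_imp_le)
    finally show "c < ereal (F u) + G u" using \<open>c = ereal c0\<close> by simp
  qed
qed

lemma lsc_attains_min:
  fixes H :: "'a::topological_space \<Rightarrow> ereal"
  assumes lsc: "\<And>x c. c < H x \<Longrightarrow> \<forall>\<^sub>F u in nhds x. c < H u"
    and K: "compact K" "K \<noteq> {}"
  shows "\<exists>m\<in>K. \<forall>u\<in>K. H m \<le> H u"
proof (rule ccontr)
  assume "\<not> ?thesis"
  hence "\<forall>u\<in>K. \<exists>v\<in>K. H v < H u" by (auto simp: not_le)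
  then obtain V where V: "\<And>u. u \<in> K \<Longrightarrow> V u \<in> K \<and> H (V u) < H u" by metis
  have "\<forall>u\<in>K. \<exists>S. open S \<and> u \<in> S \<and> (\<forall>w\<in>S. H (V u) < H w)"
  proof
    fix u assume "u \<in> K"
    hence "\<forall>\<^sub>F w in nhds u. H (V u) < H w" using V lsc by blast
    thus "\<exists>S. open S \<and> u \<in> S \<and> (\<forall>w\<in>S. H (V u) < H w)" by (simp add: eventually_nhds)
  qed
  then obtain S where S: "\<And>u. u \<in> K \<Longrightarrow> open (S u) \<and> u \<in> S u \<and> (\<forall>w\<in>S u. H (V u) < H w)"
    by metis
  have "K \<subseteq> (\<Union>c\<in>K. S c)" using S by blast
  then obtain T where T: "T \<subseteq> K" "finite T" "K \<subseteq> (\<Union>c\<in>T. S c)"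
    using compactE_image[OF K(1), of K S] S by blast
  have Tne: "T \<noteq> {}" using T K(2) by auto
  define m where "m = Min ((\<lambda>u. H (V u)) ` T)"
  have "m \<in> (\<lambda>u. H (V u)) ` T" unfolding m_def using T Tne by (intro Min_in) auto
  then obtain u0 where u0: "u0 \<in> T" "m = H (V u0)" by auto
  have "V u0 \<in> K" using V u0 T by auto
  then obtain u1 where u1: "u1 \<in> T" "V u0 \<in> S u1" using T by auto
  have "H (V u1) < H (V u0)" using S u1 T by blast
  moreover have "m \<le> H (V u1)" unfolding m_def using T u1 by (intro Min_le) auto
  ultimately show False using u0 by simp
qed

lemma exists_min:
  fixes F :: "'a::euclidean_space \<Rightarrow> real" and G :: "'a \<Rightarrow> ereal"
  assumes G_lsc: "lsc_fun G" and G_proper: "proper_fun G"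
    and Fc: "\<And>u. isCont F u"
    and coer: "coercive (\<lambda>u. ereal (F u) + G u)"
  shows "\<exists>m. m \<in> Argmin (\<lambda>u. ereal (F u) + G u)"
proof -
  define H where "H u = ereal (F u) + G u" for u
  have ninf: "G u \<noteq> -\<infinity>" for u using G_proper by (simp add: proper_fun_def)
  obtain p where p: "G p \<noteq> \<infinity>" using G_proper by (auto simp: proper_fun_def)
  obtain gp where gp: "G p = ereal gp" using p ninf[of p] by (cases "G p") auto
  have "\<forall>\<^sub>F u in at_infinity. ereal (F p + gp) < H u"
    using coer unfolding coercive_def tendsto_PInfty H_def by blast
  then obtain b where b: "\<And>u. b \<le> norm u \<Longrightarrow> ereal (F p + gp) < H u"
    by (auto simp: eventually_at_infinity)
  have Hp: "H p = ereal (F p + gp)" by (simp add: H_def gp)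
  have pK: "p \<in> cball 0 b" using b[of p] Hp by (force simp: not_le)
  have lscH: "\<And>x c. c < H x \<Longrightarrow> \<forall>\<^sub>F u in nhds x. c < H u"
    unfolding H_def by (rule lsc_sum[OF G_lsc ninf Fc])
  obtain m where m: "m \<in> cball 0 b" "\<forall>u\<in>cball 0 b. H m \<le> H u"
    using lsc_attains_min[OF lscH compact_cball, of 0 b] pK by blast
  have "H m \<le> H u" for u
  proof (cases "u \<in> cball 0 b")
    case True thus ?thesis using m by blast
  next
    case False
    hence "b \<le> norm u" by simp
    hence "H p < H u" using b Hp by simp
    moreover have "H m \<le> H p" using m pK by blast
    ultimately show ?thesis by simp
  qed
  thus ?thesis unfolding Argmin_def H_def by auto
qed



lemma min_finite:
  fixes F :: "'a \<Rightarrow> real" and G :: "'a \<Rightarrow> ereal"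
  assumes G_proper: "proper_fun G" and um: "u \<in> Argmin (\<lambda>u. ereal (F u) + G u)"
  shows "\<exists>gu. G u = ereal gu"
proof -
  have ninf: "G u \<noteq> -\<infinity>" for u using G_proper by (simp add: proper_fun_def)
  obtain p where p: "G p \<noteq> \<infinity>" using G_proper by (auto simp: proper_fun_def)
  obtain gp where gp: "G p = ereal gp" using p ninf[of p] by (cases "G p") auto
  have "ereal (F u) + G u \<le> ereal (F p) + G p" using um by (simp add: Argmin_def)
  hence "G u \<noteq> \<infinity>" using gp by auto
  thus ?thesis using ninf[of u] by (cases "G u") auto
qed

lemma min_subgrad:
  fixes F :: "'a::real_inner \<Rightarrow> real" and G :: "'a \<Rightarrow> ereal"
  assumes F_grad: "\<And>u. (F has_derivative (\<lambda>h. gradF u \<bullet> h)) (at u)"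
    and F_lip: "\<And>u v. norm (gradF u - gradF v) \<le> L * norm (u - v)"
    and L0: "L \<ge> 0"
    and G_proper: "proper_fun G" and G_convex: "ext_convex G"
    and um: "u \<in> Argmin (\<lambda>u. ereal (F u) + G u)"
    and gu: "G u = ereal gu"
  shows "ereal (gu - gradF u \<bullet> (v - u)) \<le> G v"
proof -
  have ninf: "G u \<noteq> -\<infinity>" for u using G_proper by (simp add: proper_fun_def)
  have min: "ereal (F u) + G u \<le> ereal (F v) + G v" for v using um by (simp add: Argmin_def)
  show ?thesis
  proof (cases "G v = \<infinity>")
    case True thus ?thesis by simp
  next
    case False
    then obtain gv where gv: "G v = ereal gv" using ninf[of v] by (cases "G v") auto
    have "0 \<le> gv - gu + gradF u \<bullet> (v - u)"
    proof (rule small_lemma[where C = "L * (norm (v - u))\<^sup>2"])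
      fix s :: real assume s: "0 < s" "s < 1"
      define vs where "vs = (1 - s) *\<^sub>R u + s *\<^sub>R v"
      have h: "vs - u = s *\<^sub>R (v - u)" by (simp add: vs_def algebra_simps)
      have "G vs \<le> ereal (1 - s) * G u + ereal s * G v"
        using G_convex s unfolding ext_convex_def vs_def by blast
      hence cv: "G vs \<le> ereal ((1 - s) * gu + s * gv)" by (simp add: gu gv)
      then obtain gs where gs: "G vs = ereal gs" using ninf[of vs] by (cases "G vs") auto
      have gs_le: "gs \<le> (1 - s) * gu + s * gv" using cv gs by simp
      have m2: "F u + gu \<le> F vs + gs" using min[of vs] gu gs by simp
      have t: "\<bar>F vs - F u - gradF u \<bullet> (vs - u)\<bar> \<le> L * (norm (vs - u))\<^sup>2"
        by (rule taylor_bound[OF F_grad F_lip L0])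
      have n: "(norm (vs - u))\<^sup>2 = s * (s * (norm (v - u))\<^sup>2)" using s
        by (simp add: h power2_eq_square)
      have t2: "F vs \<le> F u + s * (gradF u \<bullet> (v - u)) + L * (s * (s * (norm (v - u))\<^sup>2))"
        using t n by (simp add: h abs_le_iff)
      have "s * (gv - gu + gradF u \<bullet> (v - u)) \<ge> - (s * (s * (L * (norm (v - u))\<^sup>2)))"
        using m2 t2 gs_le by (simp add: algebra_simps)
      thus "- (s * (L * (norm (v - u))\<^sup>2)) \<le> gv - gu + gradF u \<bullet> (v - u)"
        using div_s s(1) by blast
    qed
    thus ?thesis by (simp add: gv inner_diff_right)
  qed
qed

lemma strong_ineq:
  fixes F :: "'a::real_inner \<Rightarrow> real" and G :: "'a \<Rightarrow> ereal"
  assumes F_convex: "convex_on UNIV F"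
    and F_grad: "\<And>u. (F has_derivative (\<lambda>h. gradF u \<bullet> h)) (at u)"
    and F_lip: "\<And>u v. norm (gradF u - gradF v) \<le> L * norm (u - v)"
    and L0: "L \<ge> 0"
    and strong: "\<And>x y l. 0 < l \<Longrightarrow> l < 1 \<Longrightarrow>
      ereal (F ((1 - l) *\<^sub>R x + l *\<^sub>R y)) + G ((1 - l) *\<^sub>R x + l *\<^sub>R y) + ereal (\<mu> / 2 * l * (1 - l) * (norm (x - y))\<^sup>2)
        \<le> ereal (1 - l) * (ereal (F x) + G x) + ereal l * (ereal (F y) + G y)"
    and um: "u \<in> Argmin (\<lambda>u. ereal (F u) + G u)"
    and gu: "G u = ereal gu" and gz: "G z = ereal gz"
    and sub: "\<And>v. ereal (gz + w \<bullet> (v - z)) \<le> G v"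
  shows "(gradF z + w) \<bullet> (z - u) \<ge> \<mu> / 4 * (norm (z - u))\<^sup>2"
proof -
  define mid where "mid = (1 - 1/2) *\<^sub>R z + (1/2::real) *\<^sub>R u"
  have md: "mid - z = (1/2::real) *\<^sub>R (u - z)"
  proof -
    have "(1 - 1/2::real) *\<^sub>R z = z - (1/2::real) *\<^sub>R z" using scaleR_diff_left[of 1 "1/2::real" z] by simp
    thus ?thesis unfolding mid_def by (simp add: scaleR_diff_right) (metis add_diff_cancel_left' diff_add_cancel minus_diff_eq)
  qed
  have st: "ereal (F mid) + G mid + ereal (\<mu> / 2 * (1/2) * (1 - 1/2) * (norm (z - u))\<^sup>2)
      \<le> ereal (1 - 1/2) * (ereal (F z) + G z) + ereal (1/2) * (ereal (F u) + G u)"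
    unfolding mid_def by (rule strong) auto
  have sm: "ereal (gz + w \<bullet> (mid - z)) \<le> G mid" by (rule sub)
  then obtain gm where gm: "G mid = ereal gm" by (cases "G mid") (use st gz gu in auto)
  have st2: "F mid + gm + \<mu> / 8 * (norm (z - u))\<^sup>2 \<le> (1/2) * (F z + gz) + (1/2) * (F u + gu)"
    using st gm gz gu by simp
  have sm2: "gz + (1/2) * (w \<bullet> (u - z)) \<le> gm" using sm gm by (simp add: md)
  have fm: "F z + (1/2) * (gradF z \<bullet> (u - z)) \<le> F mid"
    using grad_ineq[OF F_convex F_grad F_lip L0, of z mid] by (simp add: md)
  have min: "F u + gu \<le> F z + gz"
    using um gu gz by (simp add: Argmin_def) (metis ereal_less_eq(3) plus_ereal.simps(1))
  have "(1/2) * ((gradF z + w) \<bullet> (u - z)) + \<mu> / 8 * (norm (z - u))\<^sup>2 \<le> 0"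
  proof -
    have "(gradF z + w) \<bullet> (u - z) = gradF z \<bullet> (u - z) + w \<bullet> (u - z)" by (simp add: inner_add_left)
    thus ?thesis using st2 sm2 fm min by argo
  qed
  moreover have "(gradF z + w) \<bullet> (u - z) = - ((gradF z + w) \<bullet> (z - u))"
    by (simp add: inner_diff_right)
  ultimately show ?thesis by simp
qed

lemma unique_min:
  fixes F :: "'a::real_inner \<Rightarrow> real" and G :: "'a \<Rightarrow> ereal"
  assumes G_proper: "proper_fun G" and \<mu>: "\<mu> > 0"
    and strong: "\<And>x y l. 0 < l \<Longrightarrow> l < 1 \<Longrightarrow>
      ereal (F ((1 - l) *\<^sub>R x + l *\<^sub>R y)) + G ((1 - l) *\<^sub>R x + l *\<^sub>R y) + ereal (\<mu> / 2 * l * (1 - l) * (norm (x - y))\<^sup>2)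
        \<le> ereal (1 - l) * (ereal (F x) + G x) + ereal l * (ereal (F y) + G y)"
    and um: "u \<in> Argmin (\<lambda>u. ereal (F u) + G u)"
    and vm: "v \<in> Argmin (\<lambda>u. ereal (F u) + G u)"
  shows "v = u"
proof -
  obtain gu where gu: "G u = ereal gu" using min_finite[OF G_proper um] by blast
  obtain gv where gv: "G v = ereal gv" using min_finite[OF G_proper vm] by blast
  define mid where "mid = (1 - 1/2) *\<^sub>R u + (1/2::real) *\<^sub>R v"
  have st: "ereal (F mid) + G mid + ereal (\<mu> / 2 * (1/2) * (1 - 1/2) * (norm (u - v))\<^sup>2)
      \<le> ereal (1 - 1/2) * (ereal (F u) + G u) + ereal (1/2) * (ereal (F v) + G v)"
    unfolding mid_def by (rule strong) auto
  have ninf: "G mid \<noteq> -\<infinity>" using G_proper by (simp add: proper_fun_def)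
  then obtain gm where gm: "G mid = ereal gm" by (cases "G mid") (use st gu gv in auto)
  have st2: "F mid + gm + \<mu> / 8 * (norm (u - v))\<^sup>2 \<le> (1/2) * (F u + gu) + (1/2) * (F v + gv)"
    using st gm gu gv by simp
  have m1: "F u + gu \<le> F mid + gm" using um gu gm by (simp add: Argmin_def) (metis ereal_less_eq(3) plus_ereal.simps(1))
  have m2: "F u + gu \<le> F v + gv" using um gu gv by (simp add: Argmin_def) (metis ereal_less_eq(3) plus_ereal.simps(1))
  have m3: "F v + gv \<le> F u + gu" using vm gu gv by (simp add: Argmin_def) (metis ereal_less_eq(3) plus_ereal.simps(1))
  have "(1/2) * (F u + gu) + (1/2) * (F v + gv) = F u + gu" using m2 m3 by simp
  hence "\<mu> / 8 * (norm (u - v))\<^sup>2 \<le> 0" using st2 m1 by linarith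
  hence "(norm (u - v))\<^sup>2 \<le> 0" using \<mu> by (simp add: mult_le_0_iff)
  thus ?thesis by simp
qed



lemma amgm1:
  fixes L A D :: real assumes "L > 0"
  shows "5/6 * (A * D) \<le> A\<^sup>2 / (8 * L) + 3/2 * L * D\<^sup>2"
proof -
  have "0 \<le> (A - 10/3 * L * D)\<^sup>2 / (8 * L) + (3/2 - 100/72) * L * D\<^sup>2"
    using assms by (intro add_nonneg_nonneg) auto
  also have "\<dots> = A\<^sup>2 / (8 * L) + 3/2 * L * D\<^sup>2 - 5/6 * (A * D)"
    using assms by (simp add: power2_eq_square field_simps)
  finally show ?thesis by simp
qed

lemma amgm2:
  fixes L m D Z :: real assumes "m > 0"
  shows "L * D * Z \<le> m * Z\<^sup>2 / 2 + L\<^sup>2 * D\<^sup>2 / (2 * m)"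
proof -
  have "0 \<le> (m * Z - L * D)\<^sup>2 / (2 * m)" using assms by simp
  also have "\<dots> = m * Z\<^sup>2 / 2 + L\<^sup>2 * D\<^sup>2 / (2 * m) - L * D * Z"
    using assms by (simp add: power2_eq_square field_simps)
  finally show ?thesis by simp
qed

lemma scalar_core:
  fixes L p m \<theta> A Dn Z \<alpha> \<beta> u Sv bz cz :: real
  assumes L0: "L > 0" and p0: "p > 0" and p1: "12 * p < 1" and m0: "m > 0"
    and th: "\<theta> = min (1/2) (m / L)"
    and A0: "A \<ge> 0" and D0: "Dn \<ge> 0" and Z0: "Z \<ge> 0"
    and h\<alpha>: "\<alpha> \<ge> A\<^sup>2 / (2 * L)"
    and h\<beta>: "\<bar>\<beta>\<bar> \<le> A * Dn"
    and hS: "Sv = (1 + 5 * p) * u + 5 * L * Dn\<^sup>2 + \<beta>"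
    and hbz: "bz = (1 - 5 * p) * u - \<alpha> + \<beta>"
    and hbz0: "bz \<ge> 0" and hbz1: "bz + cz \<ge> m * Z\<^sup>2"
    and hcz: "cz \<le> \<alpha> - \<beta> + L * Dn * Z"
  shows "Sv \<ge> min (min (L / 2) (1 / (8 * L))) (\<theta> * m / 2) * (Dn\<^sup>2 + A\<^sup>2 + Z\<^sup>2)"
proof -
  define P where "P = 1 + 5 * p"
  define e where "e = 1 - 5 * p"
  define R where "R = m * Z\<^sup>2 - \<alpha> + \<beta> - L * Dn * Z"
  define c0 where "c0 = min (min (L / 2) (1 / (8 * L))) (\<theta> * m / 2)"
  have th0: "0 < \<theta>" "\<theta> \<le> 1/2" "\<theta> \<le> m / L" using m0 L0 unfolding th by (auto simp: min_def)
  have P1: "1 \<le> P" "P \<le> 17/12" using p0 p1 by (auto simp: P_def)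
  have e1: "7/12 \<le> e" "e \<le> 1" using p0 p1 by (auto simp: e_def)
  have s1: "bz \<ge> \<theta> * R"
  proof -
    have "\<theta> * (m * Z\<^sup>2 - cz) \<le> \<theta> * bz" using hbz1 th0 by (intro mult_left_mono) auto
    moreover have "\<theta> * R \<le> \<theta> * (m * Z\<^sup>2 - cz)" using hcz th0 by (intro mult_left_mono) (auto simp: R_def)
    moreover have "\<theta> * bz \<le> bz" using hbz0 th0 by (simp add: mult_left_le_one_le)
    ultimately show ?thesis by linarith
  qed
  have s2: "e * Sv = P * bz + P * \<alpha> - 10 * p * \<beta> + 5 * L * e * Dn\<^sup>2"
    by (simp add: hS hbz P_def e_def algebra_simps)
  have s3: "P * bz \<ge> P * \<theta> * m * Z\<^sup>2 - P * \<theta> * \<alpha> + P * \<theta> * \<beta> - P * \<theta> * (L * Dn * Z)"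
  proof -
    have "P * (\<theta> * R) \<le> P * bz" using s1 P1 by (intro mult_left_mono) auto
    thus ?thesis by (simp add: R_def algebra_simps)
  qed
  have b1: "(P - P * \<theta>) * \<alpha> \<ge> A\<^sup>2 / (4 * L)"
  proof -
    have "P - P * \<theta> \<ge> 1/2"
    proof -
      have "P * \<theta> \<le> P * (1/2)" using th0 P1 by (intro mult_left_mono) auto
      thus ?thesis using P1 by linarith
    qed
    moreover have "\<alpha> \<ge> 0" using h\<alpha> L0 by (smt (verit) divide_nonneg_pos zero_le_power2)
    ultimately have "(P - P * \<theta>) * \<alpha> \<ge> 1/2 * \<alpha>" by (intro mult_right_mono) auto
    moreover have "1/2 * \<alpha> \<ge> A\<^sup>2 / (4 * L)" using h\<alpha> by simp
    ultimately show ?thesis by linarith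
  qed
  have b2: "(10 * p - P * \<theta>) * \<beta> \<le> 5/6 * (A * Dn)"
  proof -
    have "\<bar>10 * p - P * \<theta>\<bar> \<le> 5/6"
    proof -
      have "P * \<theta> \<le> 17/12 * (1/2)" using P1 th0 by (intro mult_mono) auto
      moreover have "P * \<theta> \<ge> 0" using P1 th0 by simp
      ultimately show ?thesis unfolding abs_le_iff using p0 p1 by linarith
    qed
    hence "\<bar>(10 * p - P * \<theta>) * \<beta>\<bar> \<le> 5/6 * (A * Dn)"
      unfolding abs_mult using h\<beta> by (intro mult_mono) auto
    thus ?thesis by (simp add: abs_le_iff)
  qed
  have b3: "5/6 * (A * Dn) \<le> A\<^sup>2 / (8 * L) + 3/2 * L * Dn\<^sup>2" by (rule amgm1[OF L0])
  have b4: "P * \<theta> * (L * Dn * Z) \<le> P * \<theta> * m * Z\<^sup>2 / 2 + P * \<theta> * (L\<^sup>2 * Dn\<^sup>2 / (2 * m))"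
  proof -
    have "P * \<theta> * (L * Dn * Z) \<le> P * \<theta> * (m * Z\<^sup>2 / 2 + L\<^sup>2 * Dn\<^sup>2 / (2 * m))"
      using amgm2[OF m0, of L Dn Z] P1 th0 by (intro mult_left_mono) auto
    thus ?thesis by (simp add: algebra_simps)
  qed
  have b5: "P * \<theta> * (L\<^sup>2 * Dn\<^sup>2 / (2 * m)) \<le> 17/24 * L * Dn\<^sup>2"
  proof -
    have "P * \<theta> \<le> 17/12 * (m / L)" using P1 th0 by (intro mult_mono) auto
    hence "P * \<theta> * (L\<^sup>2 * Dn\<^sup>2 / (2 * m)) \<le> 17/12 * (m / L) * (L\<^sup>2 * Dn\<^sup>2 / (2 * m))"
      using m0 by (intro mult_right_mono) auto
    also have "\<dots> = 17/24 * L * Dn\<^sup>2" using m0 L0 by (simp add: power2_eq_square field_simps)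
    finally show ?thesis .
  qed
  have b6: "5 * L * e * Dn\<^sup>2 \<ge> 35/12 * L * Dn\<^sup>2"
  proof -
    have "5 * L * Dn\<^sup>2 * (7/12) \<le> 5 * L * Dn\<^sup>2 * e" using e1 L0 by (intro mult_left_mono) auto
    thus ?thesis by (simp add: algebra_simps)
  qed
  have b7: "P * \<theta> * m * Z\<^sup>2 / 2 \<ge> \<theta> * m / 2 * Z\<^sup>2"
  proof -
    have "1 * (\<theta> * m / 2 * Z\<^sup>2) \<le> P * (\<theta> * m / 2 * Z\<^sup>2)" using P1 th0 m0 by (intro mult_right_mono) auto
    thus ?thesis by (simp add: algebra_simps)
  qed
  have main: "e * Sv \<ge> L / 2 * Dn\<^sup>2 + A\<^sup>2 / (8 * L) + \<theta> * m / 2 * Z\<^sup>2"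
  proof -
    have "e * Sv = P * bz + (P - P * \<theta>) * \<alpha> + P * \<theta> * \<alpha> - (10 * p - P * \<theta>) * \<beta> - P * \<theta> * \<beta> + 5 * L * e * Dn\<^sup>2"
      unfolding s2 by (simp add: algebra_simps)
    moreover have "L / 2 * Dn\<^sup>2 \<le> 17/24 * L * Dn\<^sup>2" using L0 by simp
    moreover have "A\<^sup>2 / (8 * L) = A\<^sup>2 / (4 * L) - A\<^sup>2 / (8 * L)" by (simp add: field_simps)
    ultimately show ?thesis using s3 b1 b2 b3 b4 b5 b6 b7 by argo
  qed
  have c0S: "c0 * (Dn\<^sup>2 + A\<^sup>2 + Z\<^sup>2) \<le> L / 2 * Dn\<^sup>2 + A\<^sup>2 / (8 * L) + \<theta> * m / 2 * Z\<^sup>2"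
  proof -
    have "c0 * Dn\<^sup>2 \<le> L / 2 * Dn\<^sup>2" by (intro mult_right_mono) (auto simp: c0_def)
    moreover have "c0 * A\<^sup>2 \<le> 1 / (8 * L) * A\<^sup>2" by (intro mult_right_mono) (auto simp: c0_def)
    moreover have "c0 * Z\<^sup>2 \<le> \<theta> * m / 2 * Z\<^sup>2" by (intro mult_right_mono) (auto simp: c0_def)
    ultimately show ?thesis by (simp add: algebra_simps)
  qed
  have c00: "c0 > 0" using L0 th0 m0 by (simp add: c0_def)
  have "e * Sv \<ge> 0" using main c00 c0S
    by (smt (verit) mult_nonneg_nonneg zero_le_power2 c00)
  hence S0: "Sv \<ge> 0" using e1 by (simp add: zero_le_mult_iff)
  have "e * Sv \<le> Sv" using S0 e1 by (simp add: mult_left_le_one_le)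
  thus ?thesis using main c0S unfolding c0_def by linarith
qed



lemma sq3: fixes x y w :: real shows "(x + y + w)\<^sup>2 \<le> 3 * (x\<^sup>2 + y\<^sup>2 + w\<^sup>2)"
proof -
  have "0 \<le> (x - y)\<^sup>2 + (y - w)\<^sup>2 + (x - w)\<^sup>2" by simp
  thus ?thesis by (simp add: power2_eq_square algebra_simps)
qed

lemma vector_core:
  fixes dx dy dz a c b :: "'a::real_inner" and L \<gamma> m :: real
  assumes L0: "L > 0" and g0: "\<gamma> > 0" and g1: "12 * (L * \<gamma>) < 1" and m0: "m > 0"
    and dx_eq: "dx = (1 + 5 * L * \<gamma>) *\<^sub>R dy + \<gamma> *\<^sub>R a"
    and b_eq: "\<gamma> *\<^sub>R b = (5 * L * \<gamma>) *\<^sub>R dz + 2 *\<^sub>R dy - dx - dz"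
    and I1: "a \<bullet> dy \<ge> (norm a)\<^sup>2 / (2 * L)"
    and I2: "norm (c - a) \<le> L * norm (dy - dz)"
    and I3: "b \<bullet> dz \<ge> 0"
    and I4: "(c + b) \<bullet> dz \<ge> m * (norm dz)\<^sup>2"
  defines "c0 \<equiv> min (min (L / 2) (1 / (8 * L))) (min (1/2) (m / L) * m / 2)"
  shows "(norm (dx - 2 *\<^sub>R (dy - dz)))\<^sup>2 \<le> (1 - 4 * \<gamma> * c0 / (12 + 3 * \<gamma>\<^sup>2)) * (norm dx)\<^sup>2"
    and "(norm dz)\<^sup>2 \<le> (norm dx)\<^sup>2 / (2 * \<gamma> * c0)"
    and "(norm dy)\<^sup>2 \<le> (norm dx)\<^sup>2 / (2 * \<gamma> * c0)"
    and "c0 > 0"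
proof -
  define D where "D = dy - dz"
  define P where "P = 1 + 5 * L * \<gamma>"
  define e where "e = 1 - 5 * L * \<gamma>"
  define u where "u = (D \<bullet> dz) / \<gamma>"
  define T where "T = (norm dx)\<^sup>2 - (norm (dx - 2 *\<^sub>R D))\<^sup>2"
  define S4 where "S4 = T / (4 * \<gamma>)"
  define \<Sigma> where "\<Sigma> = (norm D)\<^sup>2 + (norm a)\<^sup>2 + (norm dz)\<^sup>2"
  have dy: "dy = dz + D" by (simp add: D_def)
  have Du: "D \<bullet> dz = \<gamma> * u" using g0 by (simp add: u_def)
  have hT: "T = 4 * (dx \<bullet> D) - 4 * (norm D)\<^sup>2"
    by (simp add: T_def power2_norm_eq_inner inner_diff_left inner_diff_right inner_commute algebra_simps)
  have dxD: "dx \<bullet> D = P * (D \<bullet> dz) + P * (norm D)\<^sup>2 + \<gamma> * (a \<bullet> D)"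
    by (simp add: dx_eq dy inner_add_left inner_commute power2_norm_eq_inner P_def algebra_simps)
  have hS: "S4 = (1 + 5 * (L * \<gamma>)) * u + 5 * L * (norm D)\<^sup>2 + a \<bullet> D"
  proof -
    have "T = 4 * \<gamma> * ((1 + 5 * (L * \<gamma>)) * u + 5 * L * (norm D)\<^sup>2 + a \<bullet> D)"
      by (simp add: hT dxD Du P_def algebra_simps)
    thus ?thesis using g0 by (simp add: S4_def)
  qed
  have bD: "\<gamma> *\<^sub>R b = e *\<^sub>R D - \<gamma> *\<^sub>R a"
    by (simp add: b_eq dx_eq e_def D_def algebra_simps scaleR_2)
  have hbz: "b \<bullet> dz = (1 - 5 * (L * \<gamma>)) * u - a \<bullet> dy + a \<bullet> D"
  proof -
    have "\<gamma> * (b \<bullet> dz) = (\<gamma> *\<^sub>R b) \<bullet> dz" by simp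
    also have "\<dots> = e * (D \<bullet> dz) - \<gamma> * (a \<bullet> dz)" by (simp add: bD inner_diff_left)
    also have "a \<bullet> dz = a \<bullet> dy - a \<bullet> D" by (simp add: D_def inner_diff_right)
    finally have "\<gamma> * (b \<bullet> dz) = \<gamma> * ((1 - 5 * (L * \<gamma>)) * u - a \<bullet> dy + a \<bullet> D)"
      by (simp add: Du e_def algebra_simps)
    thus ?thesis using g0 by simp
  qed
  have hcz: "c \<bullet> dz \<le> a \<bullet> dy - a \<bullet> D + L * norm D * norm dz"
  proof -
    have "c \<bullet> dz = a \<bullet> dz + (c - a) \<bullet> dz" by (simp add: inner_diff_left)
    also have "a \<bullet> dz = a \<bullet> dy - a \<bullet> D" by (simp add: D_def inner_diff_right)
    also have "(c - a) \<bullet> dz \<le> norm (c - a) * norm dz" by (rule norm_cauchy_schwarz)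
    also have "\<dots> \<le> L * norm D * norm dz" using I2 by (intro mult_right_mono) (auto simp: D_def)
    finally show ?thesis by simp
  qed
  have hb: "\<bar>a \<bullet> D\<bar> \<le> norm a * norm D" by (rule Cauchy_Schwarz_ineq2)
  have hbz1: "b \<bullet> dz + c \<bullet> dz \<ge> m * (norm dz)\<^sup>2" using I4 by (simp add: inner_add_left)
  have core: "S4 \<ge> c0 * \<Sigma>"
    unfolding c0_def \<Sigma>_def
    by (rule scalar_core[where L=L and p="L*\<gamma>" and m=m and A="norm a" and Dn="norm D" and Z="norm dz"
          and \<alpha>="a \<bullet> dy" and \<beta>="a \<bullet> D" and u=u and Sv=S4 and \<theta>="min (1/2) (m / L)" and bz="b \<bullet> dz" and cz="c \<bullet> dz"])
       (use I1 hb hS hbz I3 hbz1 hcz g0 L0 g1 m0 in auto)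
  have c00: "c0 > 0" using L0 m0 by (simp add: c0_def)
  have T1: "T \<ge> 4 * \<gamma> * c0 * \<Sigma>"
  proof -
    have "T = 4 * \<gamma> * S4" using g0 by (simp add: S4_def)
    moreover have "4 * \<gamma> * (c0 * \<Sigma>) \<le> 4 * \<gamma> * S4" using core g0 by simp
    ultimately show ?thesis by (simp add: mult.assoc)
  qed
  have T2: "T \<le> (norm dx)\<^sup>2" by (simp add: T_def)
  have \<Sigma>0: "\<Sigma> \<ge> 0" by (simp add: \<Sigma>_def)
  have P2: "P \<le> 2" "P \<ge> 0" using g1 g0 L0 by (auto simp: P_def)
  have dxS: "(norm dx)\<^sup>2 \<le> (12 + 3 * \<gamma>\<^sup>2) * \<Sigma>"
  proof -
    have "dx = P *\<^sub>R dz + P *\<^sub>R D + \<gamma> *\<^sub>R a" by (simp add: dx_eq P_def[symmetric] dy scaleR_add_right)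
    hence "norm dx \<le> norm (P *\<^sub>R dz) + norm (P *\<^sub>R D) + norm (\<gamma> *\<^sub>R a)"
      by (metis norm_triangle_ineq order_trans add_right_mono)
    also have "\<dots> \<le> 2 * norm dz + 2 * norm D + \<gamma> * norm a"
      using P2 g0 by (auto intro!: add_mono mult_right_mono)
    finally have "(norm dx)\<^sup>2 \<le> (2 * norm dz + 2 * norm D + \<gamma> * norm a)\<^sup>2"
      by (intro power_mono) auto
    also have "\<dots> \<le> 3 * ((2 * norm dz)\<^sup>2 + (2 * norm D)\<^sup>2 + (\<gamma> * norm a)\<^sup>2)" by (rule sq3)
    also have "\<dots> = 12 * (norm dz)\<^sup>2 + 12 * (norm D)\<^sup>2 + 3 * \<gamma>\<^sup>2 * (norm a)\<^sup>2"
      by (simp add: power_mult_distrib)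
    also have "\<dots> \<le> (12 + 3 * \<gamma>\<^sup>2) * \<Sigma>"
      by (simp add: \<Sigma>_def algebra_simps)
    finally show ?thesis .
  qed
  show "c0 > 0" by (rule c00)
  show "(norm (dx - 2 *\<^sub>R (dy - dz)))\<^sup>2 \<le> (1 - 4 * \<gamma> * c0 / (12 + 3 * \<gamma>\<^sup>2)) * (norm dx)\<^sup>2"
  proof -
    have C1: "12 + 3 * \<gamma>\<^sup>2 > 0" by (simp add: add_pos_nonneg)
    have "4 * \<gamma> * c0 * ((norm dx)\<^sup>2 / (12 + 3 * \<gamma>\<^sup>2)) \<le> 4 * \<gamma> * c0 * \<Sigma>"
      using dxS C1 g0 c00 by (intro mult_left_mono) (auto simp: divide_le_eq mult.commute)
    hence "4 * \<gamma> * c0 / (12 + 3 * \<gamma>\<^sup>2) * (norm dx)\<^sup>2 \<le> T" using T1 by simp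
    thus ?thesis by (simp add: T_def D_def algebra_simps)
  qed
  have \<Sigma>b: "\<Sigma> \<le> (norm dx)\<^sup>2 / (4 * \<gamma> * c0)"
  proof -
    have "4 * \<gamma> * c0 * \<Sigma> \<le> (norm dx)\<^sup>2" using T1 T2 by linarith
    thus ?thesis using g0 c00 by (simp add: le_divide_eq mult.commute)
  qed
  have q: "(norm dx)\<^sup>2 / (4 * \<gamma> * c0) \<le> (norm dx)\<^sup>2 / (2 * \<gamma> * c0)"
    using g0 c00 by (intro divide_left_mono) auto
  show "(norm dz)\<^sup>2 \<le> (norm dx)\<^sup>2 / (2 * \<gamma> * c0)"
  proof -
    have "(norm dz)\<^sup>2 \<le> \<Sigma>" by (simp add: \<Sigma>_def)
    thus ?thesis using \<Sigma>b q by linarith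
  qed
  show "(norm dy)\<^sup>2 \<le> (norm dx)\<^sup>2 / (2 * \<gamma> * c0)"
  proof -
    have "norm dy \<le> norm dz + norm D" by (simp add: dy norm_triangle_ineq)
    hence "(norm dy)\<^sup>2 \<le> (norm dz + norm D)\<^sup>2" by (intro power_mono) auto
    also have "\<dots> \<le> 2 * ((norm dz)\<^sup>2 + (norm D)\<^sup>2)"
    proof -
      have "0 \<le> (norm dz - norm D)\<^sup>2" by simp
      thus ?thesis by (simp add: power2_eq_square algebra_simps)
    qed
    also have "\<dots> \<le> 2 * \<Sigma>" by (simp add: \<Sigma>_def)
    also have "\<dots> \<le> 2 * ((norm dx)\<^sup>2 / (4 * \<gamma> * c0))" using \<Sigma>b by simp
    also have "\<dots> = (norm dx)\<^sup>2 / (2 * \<gamma> * c0)" by simp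
    finally show ?thesis .
  qed
qed



lemma conv_of_bound:
  fixes f :: "nat \<Rightarrow> 'a::real_normed_vector"
  assumes b: "\<And>t. t \<ge> 1 \<Longrightarrow> (norm (f t - l))\<^sup>2 \<le> M * r ^ t" and r: "0 \<le> r" "r < 1"
  shows "f \<longlonglongrightarrow> l"
proof -
  have "(\<lambda>t. sqrt (M * r ^ t)) \<longlonglongrightarrow> sqrt (M * 0)"
    using r by (intro tendsto_real_sqrt tendsto_mult tendsto_const LIMSEQ_power_zero) auto
  hence g: "(\<lambda>t. sqrt (M * r ^ t)) \<longlonglongrightarrow> 0" by simp
  have "eventually (\<lambda>t. norm (f t - l) \<le> sqrt (M * r ^ t)) sequentially"
    unfolding eventually_sequentially
  proof (intro exI allI impI)
    fix t :: nat assume "1 \<le> t"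
    hence "sqrt ((norm (f t - l))\<^sup>2) \<le> sqrt (M * r ^ t)" using b by (intro real_sqrt_le_mono) auto
    thus "norm (f t - l) \<le> sqrt (M * r ^ t)" by simp
  qed
  hence "(\<lambda>t. f t - l) \<longlonglongrightarrow> 0" by (rule Lim_null_comparison[OF _ g])
  thus ?thesis by (simp add: LIM_zero_iff)
qed



theorem proposition1:
  fixes F :: "'a::euclidean_space \<Rightarrow> real"
    and gradF :: "'a \<Rightarrow> 'a"
    and G :: "'a \<Rightarrow> ereal"
    and L \<gamma> :: real
    and x y z :: "nat \<Rightarrow> 'a"
  assumes F_convex: "convex_on UNIV F"
    and F_grad: "\<And>u. (F has_derivative (\<lambda>h. gradF u \<bullet> h)) (at u)"
    and L_pos: "L > 0"
    and F_lip: "\<And>u v. norm (gradF u - gradF v) \<le> L * norm (u - v)"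
    and G_proper: "proper_fun G"
    and G_lsc: "lsc_fun G"
    and G_prox: "\<And>w \<tau>. \<tau> > 0 \<Longrightarrow>
        Argmin (\<lambda>u. ereal \<tau> * G u + ereal ((norm (u - w))\<^sup>2 / 2)) \<noteq> {}"
    and coer: "coercive (\<lambda>u. ereal (F u) + G u)"
    and G_convex: "ext_convex G"
    and FG_strong: "ext_strongly_convex (\<lambda>u. ereal (F u) + G u)"
    and gamma: "0 < \<gamma>" "\<gamma> < 1 / (12 * L)"
    and y_step: "\<And>t. y (Suc t) \<in> Argmin (\<lambda>v. F v + 5 * L / 2 * (norm v)\<^sup>2
                    + (norm (v - x t))\<^sup>2 / (2 * \<gamma>))"
    and z_step: "\<And>t. z (Suc t) \<in> Argmin (\<lambda>v. G v - ereal (5 * L / 2 * (norm v)\<^sup>2)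
                    + ereal ((norm (2 *\<^sub>R y (Suc t) - x t - v))\<^sup>2 / (2 * \<gamma>)))"
    and x_step: "\<And>t. x (Suc t) = x t + 2 *\<^sub>R (z (Suc t) - y (Suc t))"
  shows "\<exists>yb zb xb. yb = zb
           \<and> zb \<in> Argmin (\<lambda>u. ereal (F u) + G u)
           \<and> (\<forall>u \<in> Argmin (\<lambda>u. ereal (F u) + G u). u = zb)
           \<and> y \<longlonglongrightarrow> yb \<and> z \<longlonglongrightarrow> zb \<and> x \<longlonglongrightarrow> xb
           \<and> (\<exists>M r. M > 0 \<and> 0 < r \<and> r < 1 \<and>
                (\<forall>t\<ge>1. max ((norm (y t - yb))\<^sup>2) (max ((norm (z t - zb))\<^sup>2) ((norm (x t - xb))\<^sup>2))
                        \<le> M * r ^ t))"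
proof -
  define H where "H u = ereal (F u) + G u" for u
  have L0: "L \<ge> 0" using L_pos by simp
  have g1: "12 * (L * \<gamma>) < 1"
    using gamma L_pos by (simp add: field_simps)
  obtain \<mu> where \<mu>0: "\<mu> > 0" and strong: "\<And>x y l. 0 < l \<Longrightarrow> l < 1 \<Longrightarrow>
      ereal (F ((1 - l) *\<^sub>R x + l *\<^sub>R y)) + G ((1 - l) *\<^sub>R x + l *\<^sub>R y) + ereal (\<mu> / 2 * l * (1 - l) * (norm (x - y))\<^sup>2)
        \<le> ereal (1 - l) * (ereal (F x) + G x) + ereal l * (ereal (F y) + G y)"
    using FG_strong unfolding ext_strongly_convex_def by blast
  have Fc: "isCont F u" for u using has_derivative_continuous[OF F_grad[of u]] by simp
  obtain us where us: "us \<in> Argmin (\<lambda>u. ereal (F u) + G u)"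
    using exists_min[OF G_lsc G_proper Fc coer] by blast
  obtain gu where gu: "G us = ereal gu" using min_finite[OF G_proper us] by blast
  have subu: "ereal (gu - gradF us \<bullet> (v - us)) \<le> G v" for v
    by (rule min_subgrad[OF F_grad F_lip L0 G_proper G_convex us gu])
  define xb where "xb = us + \<gamma> *\<^sub>R (gradF us + (5 * L) *\<^sub>R us)"
  define m where "m = \<mu> / 4"
  have m0: "m > 0" using \<mu>0 by (simp add: m_def)
  define c0 where "c0 = min (min (L / 2) (1 / (8 * L))) (min (1/2) (m / L) * m / 2)"
  define r where "r = 1 - 4 * \<gamma> * c0 / (12 + 3 * \<gamma>\<^sup>2)"
  define K where "K = 1 / (2 * \<gamma> * c0)"
  have c00: "c0 > 0" using L_pos m0 by (simp add: c0_def)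
  have step: "(norm (x (Suc t) - xb))\<^sup>2 \<le> r * (norm (x t - xb))\<^sup>2
      \<and> (norm (z (Suc t) - us))\<^sup>2 \<le> K * (norm (x t - xb))\<^sup>2
      \<and> (norm (y (Suc t) - us))\<^sup>2 \<le> K * (norm (x t - xb))\<^sup>2" for t
  proof -
    define yt where "yt = y (Suc t)"
    define zt where "zt = z (Suc t)"
    have yo: "gradF yt + (5 * L) *\<^sub>R yt + (1 / \<gamma>) *\<^sub>R (yt - x t) = 0"
      unfolding yt_def by (rule y_opt[OF F_grad F_lip L_pos gamma(1) y_step])
    have xt: "x t = yt + \<gamma> *\<^sub>R (gradF yt + (5 * L) *\<^sub>R yt)"
    proof -
      have "\<gamma> *\<^sub>R (gradF yt + (5 * L) *\<^sub>R yt + (1 / \<gamma>) *\<^sub>R (yt - x t)) = 0" using yo by simp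
      hence "\<gamma> *\<^sub>R (gradF yt + (5 * L) *\<^sub>R yt) + (yt - x t) = 0"
        using gamma(1) by (simp add: scaleR_add_right)
      thus ?thesis by (simp add: algebra_simps eq_diff_eq)
    qed
    obtain gz where gz: "G zt = ereal gz"
      and subz: "\<And>v. ereal (gz + ((5 * L) *\<^sub>R zt + (1 / \<gamma>) *\<^sub>R ((2 *\<^sub>R yt - x t) - zt)) \<bullet> (v - zt)) \<le> G v"
      using z_subgrad[OF G_proper G_convex gamma(1), of zt L "2 *\<^sub>R yt - x t"] z_step[of t]
      unfolding yt_def zt_def by blast
    define w where "w = (5 * L) *\<^sub>R zt + (1 / \<gamma>) *\<^sub>R ((2 *\<^sub>R yt - x t) - zt)"
    have I3: "(w + gradF us) \<bullet> (zt - us) \<ge> 0"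
    proof -
      have a: "gz + w \<bullet> (us - zt) \<le> gu" using subz[of us] gu by (simp add: w_def)
      have b: "gu - gradF us \<bullet> (zt - us) \<le> gz" using subu[of zt] gz by simp
      have "w \<bullet> (us - zt) = - (w \<bullet> (zt - us))" by (simp add: inner_diff_right)
      thus ?thesis using a b by (simp add: inner_add_left)
    qed
    have I4: "(gradF zt + w) \<bullet> (zt - us) \<ge> \<mu> / 4 * (norm (zt - us))\<^sup>2"
      by (rule strong_ineq[OF F_convex F_grad F_lip L0 strong us gu gz]) (use subz in \<open>unfold w_def\<close>)
    have I1: "(gradF yt - gradF us) \<bullet> (yt - us) \<ge> (norm (gradF yt - gradF us))\<^sup>2 / (2 * L)"
      by (rule cocoercive[OF F_convex F_grad F_lip L_pos])
    have I2: "norm ((gradF zt - gradF us) - (gradF yt - gradF us)) \<le> L * norm ((yt - us) - (zt - us))"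
      using F_lip[of zt yt] by (simp add: norm_minus_commute)
    have dx_eq: "x t - xb = (1 + 5 * L * \<gamma>) *\<^sub>R (yt - us) + \<gamma> *\<^sub>R (gradF yt - gradF us)"
      by (simp add: xt xb_def algebra_simps)
    have b_eq: "\<gamma> *\<^sub>R (w + gradF us) = (5 * L * \<gamma>) *\<^sub>R (zt - us) + 2 *\<^sub>R (yt - us) - (x t - xb) - (zt - us)"
      using gamma(1) by (simp add: w_def xb_def algebra_simps scaleR_2)
    have I4': "((gradF zt - gradF us) + (w + gradF us)) \<bullet> (zt - us) \<ge> m * (norm (zt - us))\<^sup>2"
      using I4 by (simp add: m_def algebra_simps)
    note vc = vector_core[OF L_pos gamma(1) g1 m0 dx_eq b_eq I1 I2 I3 I4']
    have xs: "x (Suc t) - xb = (x t - xb) - 2 *\<^sub>R ((yt - us) - (zt - us))"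
      by (simp add: x_step yt_def zt_def algebra_simps)
    show ?thesis using vc unfolding xs r_def K_def c0_def yt_def zt_def by simp
  qed
  have r1: "r < 1" using c00 gamma(1) by (simp add: r_def add_pos_nonneg)
  have r0: "r > 0"
  proof -
    have "c0 \<le> L / 2" unfolding c0_def by (intro min.coboundedI1) simp
    hence "4 * \<gamma> * c0 \<le> 4 * \<gamma> * (L / 2)" using gamma(1) by simp
    moreover have "4 * \<gamma> * (L / 2) = 2 * (L * \<gamma>)" by simp
    moreover have "0 \<le> \<gamma>\<^sup>2" by simp
    ultimately have "4 * \<gamma> * c0 < 12 + 3 * \<gamma>\<^sup>2" using g1 by linarith
    thus ?thesis by (simp add: r_def add_pos_nonneg)
  qed
  have K0: "K > 0" using c00 gamma(1) by (simp add: K_def)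
  define E where "E = (norm (x 0 - xb))\<^sup>2"
  have xr: "(norm (x t - xb))\<^sup>2 \<le> E * r ^ t" for t
  proof (induction t)
    case 0 thus ?case by (simp add: E_def)
  next
    case (Suc t)
    have "(norm (x (Suc t) - xb))\<^sup>2 \<le> r * (norm (x t - xb))\<^sup>2" using step by blast
    also have "\<dots> \<le> r * (E * r ^ t)" using Suc r0 by (intro mult_left_mono) auto
    finally show ?case by (simp add: algebra_simps)
  qed
  define M where "M = max (K * E / r) E + 1"
  have E0: "E \<ge> 0" by (simp add: E_def)
  have M0: "M > 0" using K0 E0 r0 by (simp add: M_def max_def)
  have yzr: "(norm (y t - us))\<^sup>2 \<le> M * r ^ t \<and> (norm (z t - us))\<^sup>2 \<le> M * r ^ t" if t1: "t \<ge> 1" for t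
  proof -
    obtain s where s: "t = Suc s" using t1 by (cases t) auto
    have kb: "K * (norm (x s - xb))\<^sup>2 \<le> M * r ^ t"
    proof -
      have "K * (norm (x s - xb))\<^sup>2 \<le> K * (E * r ^ s)" using xr K0 by (intro mult_left_mono) auto
      also have "\<dots> = (K * E / r) * r ^ t" using r0 by (simp add: s)
      also have "\<dots> \<le> M * r ^ t" using r0 by (intro mult_right_mono) (auto simp: M_def)
      finally show ?thesis .
    qed
    thus ?thesis using step[of s] unfolding s by auto
  qed
  have xr2: "(norm (x t - xb))\<^sup>2 \<le> M * r ^ t" for t
  proof -
    have "E * r ^ t \<le> M * r ^ t" using r0 by (intro mult_right_mono) (auto simp: M_def)
    thus ?thesis using xr[of t] by linarith
  qed
  have uniq: "\<forall>u \<in> Argmin (\<lambda>u. ereal (F u) + G u). u = us"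
    using unique_min[OF G_proper \<mu>0 strong us] by blast
  have cy: "y \<longlonglongrightarrow> us" by (rule conv_of_bound[of y us M r]) (use yzr r0 r1 in auto)
  have cz: "z \<longlonglongrightarrow> us" by (rule conv_of_bound[of z us M r]) (use yzr r0 r1 in auto)
  have cx: "x \<longlonglongrightarrow> xb" by (rule conv_of_bound[of x xb M r]) (use xr2 r0 r1 in auto)
  have fin: "\<forall>t\<ge>1. max ((norm (y t - us))\<^sup>2) (max ((norm (z t - us))\<^sup>2) ((norm (x t - xb))\<^sup>2)) \<le> M * r ^ t"
  proof (intro allI impI max.boundedI)
    fix t :: nat assume "1 \<le> t"
    thus "(norm (y t - us))\<^sup>2 \<le> M * r ^ t" "(norm (z t - us))\<^sup>2 \<le> M * r ^ t"
      using yzr by blast+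
    show "(norm (x t - xb))\<^sup>2 \<le> M * r ^ t" by (rule xr2)
  qed
  show ?thesis using us uniq cy cz cx M0 r0 r1 fin by blast
qed

end
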